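(* Let $A=(a_{ij})_{i,j\in\mathbb{N}}\in\{0,1\}^{\mathbb{N}\times\mathbb{N}}$ be a binary matrix in which the row and column upper/lower asymptotic densities are separated, i.e., there exist reals $0\le\alpha<\beta\le1$ with $\bar d(\mathbf{r}^{(i)})\le\alpha$ and $\underline d(\mathbf{c}^{(j)})\ge\beta$ for all $i,j\in\mathbb{N}$. Then $A$ contains a fully lower-triangular submatrix.
   Context: For $\mathbf{a}=(a_k)_{k\in\mathbb{N}}\in\{0,1\}^{\mathbb{N}}$, $\bar d(\mathbf{a})=\limsup_{n\to\infty}\frac1n\sum_{k=1}^na_k$ and $\underline d(\mathbf{a})=\liminf_{n\to\infty}\frac1n\sum_{k=1}^na_k$. The $i$-th row of $A$ is $\mathbf{r}^{(i)}=(a_{ij})_{j\in\mathbb{N}}$ and the $j$-th column is $\mathbf{c}^{(j)}=(a_{ij})_{i\in\mathbb{N}}$. $A$ contains a fully lower-triangular submatrix if there exist sequences of distinct row indices $i_1,i_2,\ldots$ and distinct column indices $j_1,j_2,\ldots$ such that $a_{i_kj_l}=1\iff k\ge l$. *)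

theory Defs
  imports "HOL-Analysis.Analysis"
begin

text \<open>Binary sequences indexed by positive naturals; a sequence is a map
  nat => nat with values in {0,1} (index 0 is ignored).
  Partial averages (1/n) * sum_{k=1..n} a_k.\<close>

definition avg_seq :: "(nat \<Rightarrow> nat) \<Rightarrow> nat \<Rightarrow> real" where
  "avg_seq a n = (\<Sum>k=1..n. real (a k)) / real n"

definition upper_density :: "(nat \<Rightarrow> nat) \<Rightarrow> ereal" where
  "upper_density a = limsup (\<lambda>n. ereal (avg_seq a n))"

definition lower_density :: "(nat \<Rightarrow> nat) \<Rightarrow> ereal" where
  "lower_density a = liminf (\<lambda>n. ereal (avg_seq a n))"

definition row :: "(nat \<Rightarrow> nat \<Rightarrow> nat) \<Rightarrow> nat \<Rightarrow> nat \<Rightarrow> nat" where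
  "row A i = (\<lambda>j. A i j)"

definition col :: "(nat \<Rightarrow> nat \<Rightarrow> nat) \<Rightarrow> nat \<Rightarrow> nat \<Rightarrow> nat" where
  "col A j = (\<lambda>i. A i j)"

definition has_fully_lower_triangular_submatrix :: "(nat \<Rightarrow> nat \<Rightarrow> nat) \<Rightarrow> bool" where
  "has_fully_lower_triangular_submatrix A \<longleftrightarrow>
     (\<exists>rI cJ :: nat \<Rightarrow> nat.
        inj_on rI {1..} \<and> inj_on cJ {1..} \<and> rI ` {1..} \<subseteq> {1..} \<and> cJ ` {1..} \<subseteq> {1..} \<and>
        (\<forall>k\<ge>1. \<forall>l\<ge>1. A (rI k) (cJ l) = 1 \<longleftrightarrow> k \<ge> l))"

end

theory Submission imports Defs "HOL-Probability.Probability" begin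


lemma diag_conv:
  fixes f :: "nat \<Rightarrow> nat \<Rightarrow> real"
  assumes bnd: "\<And>m N. \<bar>f m N\<bar> \<le> 1"
  shows "\<exists>s. strict_mono s \<and> (\<forall>m. convergent (\<lambda>t. f m (s t)))"
proof -
  interpret S: subseqs "\<lambda>m s. convergent (\<lambda>t. f m (s t))"
  proof
    fix m and s :: "nat \<Rightarrow> nat"
    assume "strict_mono s"
    have "bounded (range (\<lambda>t. f m (s t)))"
      using bnd by (intro boundedI[of _ 1]) auto
    then obtain l r where r: "strict_mono (r::nat\<Rightarrow>nat)" "((\<lambda>t. f m (s t)) \<circ> r) \<longlonglongrightarrow> l"
      using bounded_imp_convergent_subsequence by blast
    then show "\<exists>r'. strict_mono r' \<and> convergent (\<lambda>t. f m ((s \<circ> r') t))"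
      by (auto simp: convergent_def o_def)
  qed
  have "convergent (\<lambda>t. f m (S.diagseq t))" for m
  proof -
    have "convergent (\<lambda>t. f m ((S.diagseq \<circ> (+) (Suc m)) t))"
    proof (rule S.diagseq_holds)
      fix r s n assume "strict_mono (r::nat\<Rightarrow>nat)" "convergent (\<lambda>t. f n (s t))"
      then show "convergent (\<lambda>t. f n ((s \<circ> r) t))"
        using convergent_subseq_convergent[of "\<lambda>t. f n (s t)" r] by (simp add: o_def)
    qed
    then obtain l where "(\<lambda>t. f m (S.diagseq (t + Suc m))) \<longlonglongrightarrow> l"
      by (auto simp: convergent_def o_def add.commute)
    then have "(\<lambda>t. f m (S.diagseq t)) \<longlonglongrightarrow> l" by (rule LIMSEQ_offset)
    then show ?thesis by (auto simp: convergent_def)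
  qed
  then show ?thesis using S.subseq_diagseq by blast
qed



locale tri =
  fixes A :: "nat \<Rightarrow> nat \<Rightarrow> nat" and \<alpha> \<beta> :: real
  assumes binary: "\<And>i j. i \<ge> 1 \<Longrightarrow> j \<ge> 1 \<Longrightarrow> A i j \<in> {0, 1}"
    and a0: "0 \<le> \<alpha>" and ab: "\<alpha> < \<beta>" and b1: "\<beta> \<le> 1"
    and rows: "\<And>i. i \<ge> 1 \<Longrightarrow> upper_density (row A i) \<le> ereal \<alpha>"
    and cols: "\<And>j. j \<ge> 1 \<Longrightarrow> lower_density (col A j) \<ge> ereal \<beta>"
begin

definition Lset :: "nat \<Rightarrow> nat set" where "Lset c = {r. c < r \<and> A r c = 1}"
definition Zset :: "nat \<Rightarrow> nat set" where "Zset r = {c. r < c \<and> A r c = 0}"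
definition X :: "nat \<Rightarrow> nat \<Rightarrow> real" where
  "X n i = (if even i then (if n \<in> Lset (i div 2) then 1 else 0)
            else (if n \<in> Zset (i div 2) then 1 else 0))"
definition Pat :: "nat set \<Rightarrow> (nat \<Rightarrow> real) set" where "Pat J = PiE J (\<lambda>_. {0,1})"
definition emp :: "nat \<Rightarrow> nat set \<Rightarrow> (nat \<Rightarrow> real) set \<Rightarrow> real" where
  "emp N J V = real (card {n \<in> {1..N}. restrict (X n) J \<in> V}) / real N"

lemma X_01: "X n i \<in> {0,1}" by (simp add: X_def)

lemma X_even: "X n (2*c) = 1 \<longleftrightarrow> c < n \<and> A n c = 1"
  by (simp add: X_def Lset_def)
lemma X_odd: "X n (2*r+1) = 1 \<longleftrightarrow> r < n \<and> A r n = 0"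
  by (simp add: X_def Zset_def)

lemma restrict_X_Pat: "restrict (X n) J \<in> Pat J"
  using X_01 by (auto simp: Pat_def)

lemma finite_Pat: "finite J \<Longrightarrow> finite (Pat J)"
  by (auto simp: Pat_def intro!: finite_PiE)

lemma restrict_Pat: "u \<in> Pat J \<Longrightarrow> restrict u J = u"
  by (auto simp: Pat_def PiE_def extensional_restrict)

lemma emp_nonneg: "0 \<le> emp N J V" by (simp add: emp_def)
lemma emp_le1: "emp N J V \<le> 1"
proof -
  have "card {n \<in> {1..N}. restrict (X n) J \<in> V} \<le> card {1..N}"
    by (rule card_mono) auto
  then show ?thesis by (cases "N = 0") (auto simp: emp_def divide_le_eq)
qed

lemma emp_decomp:
  assumes K: "finite K" "J \<subseteq> K"
  shows "emp N J V = (\<Sum>u\<in>{u \<in> Pat K. restrict u J \<in> V}. emp N K {u})"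
proof -
  let ?U = "{u \<in> Pat K. restrict u J \<in> V}"
  let ?F = "\<lambda>u. {n \<in> {1..N}. restrict (X n) K \<in> {u}}"
  have eq: "{n \<in> {1..N}. restrict (X n) J \<in> V} = (\<Union>u\<in>?U. ?F u)"
  proof (intro set_eqI iffI)
    fix n assume n: "n \<in> {n \<in> {1..N}. restrict (X n) J \<in> V}"
    have "restrict (restrict (X n) K) J = restrict (X n) J"
      using K by (force simp: restrict_def fun_eq_iff)
    then show "n \<in> (\<Union>u\<in>?U. ?F u)"
      using n restrict_X_Pat[of n K] by (auto intro!: bexI[of _ "restrict (X n) K"])
  next
    fix n assume "n \<in> (\<Union>u\<in>?U. ?F u)"
    then obtain u where u: "u \<in> ?U" "n \<in> ?F u" by blast
    have "restrict (restrict (X n) K) J = restrict (X n) J"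
      using K by (force simp: restrict_def fun_eq_iff)
    then show "n \<in> {n \<in> {1..N}. restrict (X n) J \<in> V}" using u by auto
  qed
  have fin: "finite ?U" using finite_Pat[OF K(1)] by auto
  have "card {n \<in> {1..N}. restrict (X n) J \<in> V} = (\<Sum>u\<in>?U. card (?F u))"
    unfolding eq by (rule card_UN_disjoint) (use fin in auto)
  then show ?thesis
    by (simp add: emp_def sum_divide_distrib[symmetric])
qed

definition enc :: "bool list \<Rightarrow> nat \<Rightarrow> real" where
  "enc bs = restrict (\<lambda>i. if bs ! i then 1 else 0) {..<length bs}"

lemma enc_surj:
  assumes "u \<in> Pat {..<k}"
  shows "enc (map (\<lambda>i. u i = 1) [0..<k]) = u"
proof
  fix i
  show "enc (map (\<lambda>i. u i = 1) [0..<k]) i = u i"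
    using assms by (cases "i < k") (auto simp: enc_def Pat_def PiE_def extensional_def)
qed

definition sq :: "nat \<Rightarrow> nat" where
  "sq = (SOME s. strict_mono s \<and> (\<forall>m. convergent (\<lambda>t. emp (Suc (s t))
      {..<length (from_nat m :: bool list)} {enc (from_nat m)})))"

lemma ex_sq: "\<exists>s. strict_mono s \<and> (\<forall>m. convergent (\<lambda>t. emp (Suc (s t))
      {..<length (from_nat m :: bool list)} {enc (from_nat m)}))"
proof (rule diag_conv)
  fix m N
  show "\<bar>emp (Suc N) {..<length (from_nat m :: bool list)} {enc (from_nat m)}\<bar> \<le> 1"
    using emp_nonneg emp_le1 by (simp add: abs_le_iff)
qed

lemma sq: "strict_mono sq \<and> (\<forall>m. convergent (\<lambda>t. emp (Suc (sq t))
      {..<length (from_nat m :: bool list)} {enc (from_nat m)}))"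
  using someI_ex[OF ex_sq] unfolding sq_def .

lemma sq_mono: "strict_mono sq" using sq by blast

lemma conv_k: "convergent (\<lambda>t. emp (Suc (sq t)) {..<k} {u})"
proof (cases "u \<in> Pat {..<k}")
  case True
  define bs where "bs = map (\<lambda>i. u i = 1) [0..<k]"
  have "length bs = k" "enc bs = u" using enc_surj[OF True] by (auto simp: bs_def)
  then show ?thesis using sq[THEN conjunct2, rule_format, of "to_nat bs"] by simp
next
  case False
  then have "emp N {..<k} {u} = 0" for N
    using restrict_X_Pat[of _ "{..<k}"] by (auto simp: emp_def)
  then show ?thesis by (simp add: convergent_const)
qed

lemma conv:
  assumes "finite J"
  shows "convergent (\<lambda>t. emp (Suc (sq t)) J V)"
proof -
  define k where "k = Suc (Max (insert 0 J))"
  have JK: "J \<subseteq> {..<k}" using assms by (auto simp: k_def less_Suc_eq_le)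
  show ?thesis
    unfolding emp_decomp[OF finite_lessThan JK]
    by (rule convergent_sum) (simp add: conv_k)
qed

definition W :: "nat set \<Rightarrow> (nat \<Rightarrow> real) set \<Rightarrow> real" where
  "W J V = lim (\<lambda>t. emp (Suc (sq t)) J V)"

lemma W_tendsto: "finite J \<Longrightarrow> (\<lambda>t. emp (Suc (sq t)) J V) \<longlonglongrightarrow> W J V"
  unfolding W_def using conv by (simp add: convergent_LIMSEQ_iff)

lemma W_nonneg: "finite J \<Longrightarrow> 0 \<le> W J V"
  by (rule LIMSEQ_le_const[OF W_tendsto]) (auto simp: emp_nonneg)

lemma W_le1: "finite J \<Longrightarrow> W J V \<le> 1"
  by (rule LIMSEQ_le_const2[OF W_tendsto]) (auto simp: emp_le1)

lemma W_sum:
  assumes "finite J"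
  shows "W J V = (\<Sum>u\<in>Pat J \<inter> V. W J {u})"
proof -
  have eq: "{u \<in> Pat J. restrict u J \<in> V} = Pat J \<inter> V" using restrict_Pat by auto
  have "(\<lambda>t. emp (Suc (sq t)) J V) \<longlonglongrightarrow> (\<Sum>u\<in>Pat J \<inter> V. W J {u})"
    unfolding emp_decomp[OF assms order_refl, of _ V] eq
    by (intro tendsto_sum W_tendsto assms)
  then show ?thesis using W_tendsto[OF assms] LIMSEQ_unique by blast
qed

lemma W_Pat:
  assumes "finite J" shows "W J (Pat J) = 1"
proof -
  have "emp (Suc N) J (Pat J) = 1" for N
  proof -
    have "{n \<in> {1..Suc N}. restrict (X n) J \<in> Pat J} = {1..Suc N}"
      using restrict_X_Pat by auto
    then show ?thesis by (simp add: emp_def del: Suc_eq_plus1)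
  qed
  then have "(\<lambda>t. emp (Suc (sq t)) J (Pat J)) = (\<lambda>t. 1)" by simp
  then show ?thesis using W_tendsto[OF assms, of "Pat J"] LIMSEQ_unique[OF _ tendsto_const] by metis
qed

end


context tri begin

definition wt :: "nat set \<Rightarrow> (nat \<Rightarrow> real) \<Rightarrow> real" where
  "wt J v = (if v \<in> Pat J then W J {v} else 0)"

lemma wt_nonneg: "finite J \<Longrightarrow> 0 \<le> wt J v"
  by (simp add: wt_def W_nonneg)

lemma wt_sum1: 
  assumes J: "finite J"
  shows "(\<integral>\<^sup>+x. ennreal (wt J x) \<partial>count_space UNIV) = 1"
proof -
  have "(\<integral>\<^sup>+x. ennreal (wt J x) \<partial>count_space UNIV) = (\<integral>\<^sup>+x. ennreal (W J {x}) * indicator (Pat J) x \<partial>count_space UNIV)"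
    by (intro nn_integral_cong) (auto simp: wt_def)
  also have "\<dots> = (\<integral>\<^sup>+x. ennreal (W J {x}) \<partial>count_space (Pat J))"
    by (rule nn_integral_count_space_indicator[symmetric]) simp
  also have "\<dots> = (\<Sum>x\<in>Pat J. ennreal (W J {x}))"
    by (rule nn_integral_count_space_finite[OF finite_Pat[OF J]])
  also have "\<dots> = ennreal (\<Sum>x\<in>Pat J. W J {x})"
    by (rule sum_ennreal) (simp add: W_nonneg J)
  also have "(\<Sum>x\<in>Pat J. W J {x}) = W J (Pat J)"
    using W_sum[OF J, of "Pat J"] by simp
  finally show ?thesis using W_Pat[OF J] by simp
qed

definition pm :: "nat set \<Rightarrow> (nat \<Rightarrow> real) pmf" where
  "pm J = embed_pmf (wt J)"

lemma pmf_pm: "finite J \<Longrightarrow> pmf (pm J) v = wt J v"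
  unfolding pm_def by (rule pmf_embed_pmf[OF wt_nonneg wt_sum1])

lemma set_pm: "finite J \<Longrightarrow> set_pmf (pm J) \<subseteq> Pat J"
  unfolding pm_def by (subst set_embed_pmf[OF wt_nonneg wt_sum1]) (auto simp: wt_def split: if_splits)

definition P :: "nat set \<Rightarrow> (nat \<Rightarrow> real) measure" where
  "P J = distr (measure_pmf (pm J)) (PiM J (\<lambda>_. borel)) (\<lambda>x. restrict x J)"

lemma meas_restr: "(\<lambda>x. restrict x J) \<in> measurable (measure_pmf (pm J)) (PiM J (\<lambda>_. borel))"
  by (simp add: space_PiM)

lemma sets_P[simp]: "sets (P J) = sets (PiM J (\<lambda>_. borel))"
  by (simp add: P_def)

lemma prob_P: "prob_space (P J)"
  unfolding P_def by (rule measure_pmf.prob_space_distr[OF meas_restr])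

lemma emeasure_P:
  assumes J: "finite J" and Xs: "Y \<in> sets (PiM J (\<lambda>_. borel))"
  shows "emeasure (P J) Y = ennreal (W J Y)"
proof -
  let ?A = "(\<lambda>x. restrict x J) -` Y"
  have "emeasure (P J) Y = emeasure (measure_pmf (pm J)) (?A \<inter> space (measure_pmf (pm J)))"
    unfolding P_def by (rule emeasure_distr[OF meas_restr Xs])
  also have "\<dots> = emeasure (measure_pmf (pm J)) (Y \<inter> Pat J)"
  proof (rule emeasure_eq_AE)
    show "AE x in measure_pmf (pm J). (x \<in> ?A \<inter> space (measure_pmf (pm J))) = (x \<in> Y \<inter> Pat J)"
      using set_pm[OF J] restrict_Pat by (auto simp: AE_measure_pmf_iff)
  qed auto
  also have "\<dots> = ennreal (\<Sum>x\<in>Y \<inter> Pat J. pmf (pm J) x)"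
    by (rule emeasure_measure_pmf_finite) (use finite_Pat[OF J] in auto)
  also have "\<dots> = ennreal (\<Sum>x\<in>Pat J \<inter> Y. W J {x})"
  proof -
    have e1: "Y \<inter> Pat J = Pat J \<inter> Y" by blast
    have "(\<Sum>x\<in>Y \<inter> Pat J. pmf (pm J) x) = (\<Sum>x\<in>Y \<inter> Pat J. W J {x})"
      by (rule sum.cong) (auto simp: pmf_pm J wt_def)
    then show ?thesis unfolding e1 by simp
  qed
  also have "(\<Sum>x\<in>Pat J \<inter> Y. W J {x}) = W J Y" by (rule W_sum[OF J, symmetric])
  finally show ?thesis .
qed

lemma W_cong: "(\<And>n. restrict (X n) J \<in> V \<longleftrightarrow> restrict (X n) H \<in> V') \<Longrightarrow> W J V = W H V'"
  by (simp add: W_def emp_def)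

lemma P_proj:
  assumes JH: "J \<subseteq> H" and H: "finite H"
  shows "P J = distr (P H) (PiM J (\<lambda>_. borel)) (\<lambda>f. restrict f J)"
proof (rule measure_eqI)
  have J: "finite J" using JH H finite_subset by blast
  have mr: "(\<lambda>f. restrict f J) \<in> measurable (P H) (PiM J (\<lambda>_. borel))"
    using JH by (simp add: measurable_cong_sets[OF sets_P refl] measurable_restrict_subset)
  show "sets (P J) = sets (distr (P H) (PiM J (\<lambda>_. borel)) (\<lambda>f. restrict f J))" by simp
  fix Y assume "Y \<in> sets (P J)"
  then have Y: "Y \<in> sets (PiM J (\<lambda>_. borel))" by simp
  have Ys: "(\<lambda>f. restrict f J) -` Y \<inter> space (P H) \<in> sets (PiM H (\<lambda>_. borel))"
    using measurable_sets[OF mr Y] by simp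
  have sp: "space (P H) = space (PiM H (\<lambda>_. borel))"
    by (rule sets_eq_imp_space_eq) simp
  have "emeasure (distr (P H) (PiM J (\<lambda>_. borel)) (\<lambda>f. restrict f J)) Y
      = emeasure (P H) ((\<lambda>f. restrict f J) -` Y \<inter> space (P H))"
    by (rule emeasure_distr[OF mr Y])
  also have "\<dots> = ennreal (W H ((\<lambda>f. restrict f J) -` Y \<inter> space (P H)))"
    by (rule emeasure_P[OF H Ys])
  also have "W H ((\<lambda>f. restrict f J) -` Y \<inter> space (P H)) = W J Y"
  proof (rule W_cong[symmetric])
    fix n
    have "restrict (restrict (X n) H) J = restrict (X n) J"
      using JH by (force simp: restrict_def fun_eq_iff)
    then show "restrict (X n) J \<in> Y \<longleftrightarrow> restrict (X n) H \<in> (\<lambda>f. restrict f J) -` Y \<inter> space (P H)"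
      by (simp add: sp space_PiM)
  qed
  finally have eq: "emeasure (distr (P H) (PiM J (\<lambda>_. borel)) (\<lambda>f. restrict f J)) Y = ennreal (W J Y)" .
  show "emeasure (P J) Y = emeasure (distr (P H) (PiM J (\<lambda>_. borel)) (\<lambda>f. restrict f J)) Y"
    by (simp only: eq emeasure_P[OF J Y])
qed

lemma proj_fam: "projective_family UNIV P (\<lambda>_. borel)"
  unfolding projective_family_def using P_proj prob_P by blast

end

sublocale tri \<subseteq> PP: polish_projective UNIV P
  unfolding polish_projective_def by (rule proj_fam)

context tri begin

abbreviation mu where "mu \<equiv> PP.lim"

lemma mu_prob: "prob_space mu" by (rule PP.P.prob_space_axioms)

lemma space_mu[simp]: "space mu = UNIV"
  by (simp add: space_PiM PiE_UNIV_domain)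

lemma sets_mu[simp]: "sets mu = sets (PiM UNIV (\<lambda>_. borel))" by simp

lemma mu_emb:
  assumes J: "finite J" and Y: "Y \<in> sets (PiM J (\<lambda>_. borel))"
  shows "emeasure mu {\<omega>. restrict \<omega> J \<in> Y} = ennreal (W J Y)"
proof -
  have "prod_emb UNIV (\<lambda>_. borel) J Y = {\<omega>. restrict \<omega> J \<in> Y}"
    by (auto simp: prod_emb_def PiE_UNIV_domain)
  then show ?thesis using PP.emeasure_lim_emb[OF _ J Y] emeasure_P[OF J Y] by simp
qed

end


lemma sum_binary_card:
  assumes "finite S" "\<And>k. k \<in> S \<Longrightarrow> f k \<in> {0, 1::nat}"
  shows "(\<Sum>k\<in>S. real (f k)) = real (card {k\<in>S. f k = 1})"
proof -
  have "(\<Sum>k\<in>S. real (f k)) = (\<Sum>k\<in>S. if f k = 1 then 1 else 0)"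
    using assms(2) by (intro sum.cong) force+
  also have "\<dots> = (\<Sum>k\<in>{k\<in>S. f k = 1}. 1)"
    by (rule sum.inter_filter[symmetric]) (rule assms(1))
  finally show ?thesis by simp
qed

context tri begin

lemma W_lower:
  assumes J: "finite J" and ev: "\<And>\<epsilon>. \<epsilon> > 0 \<Longrightarrow> \<exists>N0. \<forall>N\<ge>N0. emp N J V \<ge> \<gamma> - \<epsilon>"
  shows "W J V \<ge> \<gamma>"
proof (rule field_le_epsilon)
  fix \<epsilon> :: real assume "\<epsilon> > 0"
  then obtain N0 where N0: "\<And>N. N \<ge> N0 \<Longrightarrow> emp N J V \<ge> \<gamma> - \<epsilon>" using ev by blast
  have "\<forall>t\<ge>N0. \<gamma> - \<epsilon> \<le> emp (Suc (sq t)) J V"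
  proof safe
    fix t assume "N0 \<le> t"
    also have "t \<le> sq t" by (rule seq_suble[OF sq_mono])
    finally show "\<gamma> - \<epsilon> \<le> emp (Suc (sq t)) J V" by (intro N0) simp
  qed
  then have "\<gamma> - \<epsilon> \<le> W J V" by (intro LIMSEQ_le_const[OF W_tendsto[OF J]]) blast
  then show "\<gamma> \<le> W J V + \<epsilon>" by simp
qed

lemma emp_single: "emp N {i} {v. v i = 1} = real (card {n\<in>{1..N}. X n i = 1}) / real N"
  by (simp add: emp_def)

lemma W_col:
  assumes c: "c \<ge> 1"
  shows "W {2*c} {v. v (2*c) = 1} \<ge> \<beta>"
proof (rule W_lower)
  fix \<epsilon> :: real assume e: "\<epsilon> > 0"
  have "ereal (\<beta> - \<epsilon>/2) < ereal \<beta>" using e by simp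
  also have "ereal \<beta> \<le> liminf (\<lambda>n. ereal (avg_seq (col A c) n))"
    using cols[OF c] by (simp add: lower_density_def)
  finally have "eventually (\<lambda>n. ereal (\<beta> - \<epsilon>/2) < ereal (avg_seq (col A c) n)) sequentially"
    by (rule less_LiminfD)
  then obtain N1 where N1: "\<And>N. N \<ge> N1 \<Longrightarrow> \<beta> - \<epsilon>/2 < avg_seq (col A c) N"
    unfolding eventually_sequentially by auto
  obtain N2 :: nat where N2: "real N2 \<ge> 2 * real c / \<epsilon>" using real_arch_simple by blast
  show "\<exists>N0. \<forall>N\<ge>N0. \<beta> - \<epsilon> \<le> emp N {2*c} {v. v (2*c) = 1}"
  proof (intro exI[of _ "max 1 (max N1 N2)"] allI impI)
    fix N assume N: "max 1 (max N1 N2) \<le> N"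
    then have Npos: "real N > 0" and NN1: "N1 \<le> N" and NN2: "N2 \<le> N" by auto
    have sum_eq: "(\<Sum>k=1..N. real (A k c)) = real (card {k\<in>{1..N}. A k c = 1})"
      using binary c by (intro sum_binary_card) auto
    have "{k\<in>{1..N}. A k c = 1} \<subseteq> {n\<in>{1..N}. c < n \<and> A n c = 1} \<union> {1..c}" by auto
    then have "card {k\<in>{1..N}. A k c = 1} \<le> card ({n\<in>{1..N}. c < n \<and> A n c = 1} \<union> {1..c})"
      by (intro card_mono) auto
    also have "\<dots> \<le> card {n\<in>{1..N}. c < n \<and> A n c = 1} + card {1..c}" by (rule card_Un_le)
    finally have cnt: "real (card {k\<in>{1..N}. A k c = 1}) \<le> real (card {n\<in>{1..N}. c < n \<and> A n c = 1}) + real c"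
      by simp
    have avg: "avg_seq (col A c) N = real (card {k\<in>{1..N}. A k c = 1}) / real N"
      unfolding avg_seq_def col_def by (simp only: sum_eq)
    have "\<beta> - \<epsilon>/2 < real (card {k\<in>{1..N}. A k c = 1}) / real N"
      using N1[OF NN1] unfolding avg .
    moreover have "real c / real N \<le> \<epsilon>/2"
    proof -
      have "2 * real c / \<epsilon> \<le> real N" using N2 NN2 by (smt (verit) of_nat_le_iff)
      then show ?thesis using e Npos by (simp add: field_simps)
    qed
    ultimately have "\<beta> - \<epsilon> \<le> real (card {n\<in>{1..N}. c < n \<and> A n c = 1}) / real N"
      using cnt Npos by (simp add: field_simps)
    moreover have "{n\<in>{1..N}. X n (2*c) = 1} = {n\<in>{1..N}. c < n \<and> A n c = 1}"
      using X_even by auto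
    ultimately show "\<beta> - \<epsilon> \<le> emp N {2*c} {v. v (2*c) = 1}"
      by (simp add: emp_single)
  qed
qed simp

lemma W_row:
  assumes r: "r \<ge> 1"
  shows "W {2*r+1} {v. v (2*r+1) = 1} \<ge> 1 - \<alpha>"
proof (rule W_lower)
  fix \<epsilon> :: real assume e: "\<epsilon> > 0"
  have "limsup (\<lambda>n. ereal (avg_seq (row A r) n)) \<le> ereal \<alpha>"
    using rows[OF r] by (simp add: upper_density_def)
  moreover have "ereal \<alpha> < ereal (\<alpha> + \<epsilon>/2)" using e by simp
  ultimately have "limsup (\<lambda>n. ereal (avg_seq (row A r) n)) < ereal (\<alpha> + \<epsilon>/2)" by (rule le_less_trans)
  then have "eventually (\<lambda>n. ereal (avg_seq (row A r) n) < ereal (\<alpha> + \<epsilon>/2)) sequentially"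
    by (rule Limsup_lessD)
  then obtain N1 where N1: "\<And>N. N \<ge> N1 \<Longrightarrow> avg_seq (row A r) N < \<alpha> + \<epsilon>/2"
    unfolding eventually_sequentially by auto
  obtain N2 :: nat where N2: "real N2 \<ge> 2 * real r / \<epsilon>" using real_arch_simple by blast
  show "\<exists>N0. \<forall>N\<ge>N0. 1 - \<alpha> - \<epsilon> \<le> emp N {2*r+1} {v. v (2*r+1) = 1}"
  proof (intro exI[of _ "max 1 (max N1 N2)"] allI impI)
    fix N assume N: "max 1 (max N1 N2) \<le> N"
    then have Npos: "real N > 0" and NN1: "N1 \<le> N" and NN2: "N2 \<le> N" by auto
    have sum_eq: "(\<Sum>k=1..N. real (A r k)) = real (card {k\<in>{1..N}. A r k = 1})"
      using binary r by (intro sum_binary_card) auto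
    have "{1..N} \<subseteq> {n\<in>{1..N}. r < n \<and> A r n = 0} \<union> {1..r} \<union> {k\<in>{1..N}. A r k = 1}"
    proof
      fix n assume n: "n \<in> {1..N}"
      then have "A r n \<in> {0,1}" using binary r by auto
      then show "n \<in> {n\<in>{1..N}. r < n \<and> A r n = 0} \<union> {1..r} \<union> {k\<in>{1..N}. A r k = 1}"
        using n by (cases "r < n") auto
    qed
    then have "card {1..N} \<le> card ({n\<in>{1..N}. r < n \<and> A r n = 0} \<union> {1..r} \<union> {k\<in>{1..N}. A r k = 1})"
      by (intro card_mono) auto
    also have "\<dots> \<le> card ({n\<in>{1..N}. r < n \<and> A r n = 0} \<union> {1..r}) + card {k\<in>{1..N}. A r k = 1}"
      by (rule card_Un_le)
    also have "\<dots> \<le> card {n\<in>{1..N}. r < n \<and> A r n = 0} + card {1..r} + card {k\<in>{1..N}. A r k = 1}"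
      using card_Un_le[of "{n\<in>{1..N}. r < n \<and> A r n = 0}" "{1..r}"] by linarith
    finally have cnt: "real N \<le> real (card {n\<in>{1..N}. r < n \<and> A r n = 0}) + real r + real (card {k\<in>{1..N}. A r k = 1})"
      by simp
    have avg: "avg_seq (row A r) N = real (card {k\<in>{1..N}. A r k = 1}) / real N"
      unfolding avg_seq_def row_def by (simp only: sum_eq)
    have "real (card {k\<in>{1..N}. A r k = 1}) / real N < \<alpha> + \<epsilon>/2"
      using N1[OF NN1] unfolding avg .
    moreover have "real r / real N \<le> \<epsilon>/2"
    proof -
      have "2 * real r / \<epsilon> \<le> real N" using N2 NN2 by (smt (verit) of_nat_le_iff)
      then show ?thesis using e Npos by (simp add: field_simps)
    qed
    ultimately have "1 - \<alpha> - \<epsilon> \<le> real (card {n\<in>{1..N}. r < n \<and> A r n = 0}) / real N"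
      using cnt Npos by (simp add: field_simps)
    moreover have "{n\<in>{1..N}. X n (2*r+1) = 1} = {n\<in>{1..N}. r < n \<and> A r n = 0}"
      using X_odd by auto
    ultimately show "1 - \<alpha> - \<epsilon> \<le> emp N {2*r+1} {v. v (2*r+1) = 1}"
      by (simp add: emp_single)
  qed
qed simp

lemma mu_coord: "emeasure mu {\<omega>. \<omega> i = 1} = ennreal (W {i} {v. v i = 1})"
proof -
  let ?Y = "{v \<in> space (PiM {i} (\<lambda>_. borel::real measure)). v i = 1}"
  have Y: "?Y \<in> sets (PiM {i} (\<lambda>_. borel))" by measurable
  have "{\<omega>. restrict \<omega> {i} \<in> ?Y} = {\<omega>. \<omega> i = 1}" by (auto simp: space_PiM)
  moreover have "W {i} ?Y = W {i} {v. v i = 1}"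
    by (rule W_cong) (auto simp: space_PiM)
  ultimately show ?thesis using mu_emb[OF _ Y] by simp
qed

lemma mu_L: "c \<ge> 1 \<Longrightarrow> measure mu {\<omega>. \<omega> (2*c) = 1} \<ge> \<beta>"
  using mu_coord[of "2*c"] W_col[of c] W_nonneg[of "{2*c}"]
  by (simp add: measure_def)

lemma mu_Z: "r \<ge> 1 \<Longrightarrow> measure mu {\<omega>. \<omega> (2*r+1) = 1} \<ge> 1 - \<alpha>"
  using mu_coord[of "2*r+1"] W_row[of r] W_nonneg[of "{2*r+1}"]
  by (simp add: measure_def)

end


lemma arith_aux: "(e::real) \<le> q + G \<Longrightarrow> w - d < e \<Longrightarrow> q \<le> d \<Longrightarrow> 2 * d = w - y' \<Longrightarrow> y' < G"
  by linarith

context tri begin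

lemma comp_meas[measurable]: "(\<lambda>b. b i) \<in> borel_measurable mu"
  unfolding measurable_cong_sets[OF sets_mu refl] by (rule measurable_component_singleton) simp

lemma emb_sets:
  assumes "Y \<in> sets (PiM J (\<lambda>_. borel))"
  shows "{\<omega>. restrict \<omega> J \<in> Y} \<in> sets mu"
proof -
  have "prod_emb UNIV (\<lambda>_. borel) J Y = {\<omega>. restrict \<omega> J \<in> Y}"
    by (auto simp: prod_emb_def PiE_UNIV_domain)
  then show ?thesis using measurable_prod_emb[OF _ assms, of UNIV] by simp
qed

lemma Pat_sets: "finite J \<Longrightarrow> Pat J \<in> sets (PiM J (\<lambda>_. borel))"
  unfolding Pat_def by (rule sets_PiM_I_finite) auto

lemma sub_Pat_sets:
  assumes J: "finite J" and V: "V \<subseteq> Pat J"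
  shows "V \<in> sets (PiM J (\<lambda>_. borel))"
proof -
  have fin: "finite V" using finite_subset[OF V finite_Pat[OF J]] .
  have "V = (\<Union>v\<in>V. PiE J (\<lambda>i. {v i}))"
  proof -
    have "PiE J (\<lambda>i. {v i}) = {v}" if "v \<in> V" for v
      using V that by (intro PiE_singleton) (auto simp: Pat_def PiE_def)
    then show ?thesis by auto
  qed
  also have "\<dots> \<in> sets (PiM J (\<lambda>_. borel))"
    using fin J by (intro sets.finite_UN sets_PiM_I_finite) auto
  finally show ?thesis .
qed

lemma W_liminf:
  assumes J: "finite J" and c: "0 \<le> c"
    and bnd: "\<And>N. N \<ge> 1 \<Longrightarrow> emp N J V \<le> c / real N + gf N"
  shows "ennreal (W J V) \<le> liminf (\<lambda>t. ennreal (gf (Suc (sq t))))"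
  unfolding le_Liminf_iff
proof (intro allI impI)
  fix y assume y: "y < ennreal (W J V)"
  then obtain y' where y': "y = ennreal y'" "0 \<le> y'" by (cases y) auto
  with y have yW: "y' < W J V" by (simp add: ennreal_less_iff W_nonneg J)
  define \<delta> where "\<delta> = (W J V - y') / 2"
  have dpos: "\<delta> > 0" using yW by (simp add: \<delta>_def)
  have ev1: "eventually (\<lambda>t. W J V - \<delta> < emp (Suc (sq t)) J V) sequentially"
    using W_tendsto[OF J] dpos by (intro order_tendstoD(1)) auto
  obtain N2 :: nat where N2: "real N2 \<ge> c / \<delta>" using real_arch_simple by blast
  have ev2: "eventually (\<lambda>t. c / real (Suc (sq t)) \<le> \<delta>) sequentially"
    unfolding eventually_sequentially
  proof (intro exI[of _ N2] allI impI)
    fix t assume "N2 \<le> t"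
    also have "t \<le> sq t" by (rule seq_suble[OF sq_mono])
    finally have "real N2 \<le> real (Suc (sq t))" by simp
    then have "c / \<delta> \<le> real (Suc (sq t))" using N2 by linarith
    then show "c / real (Suc (sq t)) \<le> \<delta>" using dpos c
      by (simp add: field_simps del: of_nat_Suc)
  qed
  show "eventually (\<lambda>t. y < ennreal (gf (Suc (sq t)))) sequentially"
    using ev1 ev2
  proof eventually_elim
    case (elim t)
    have f1: "emp (Suc (sq t)) J V \<le> c / real (Suc (sq t)) + gf (Suc (sq t))" by (rule bnd) simp
    have f4: "2 * \<delta> = W J V - y'" by (simp add: \<delta>_def)
    have "y' < gf (Suc (sq t))" by (rule arith_aux[OF f1 elim(1) elim(2) f4])
    then show ?case using y' by (simp add: ennreal_lessI)
  qed
qed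

lemma section_bound:
  "emeasure mu {b. \<exists>k M. \<forall>n>M. n \<in> Q \<longrightarrow> (\<exists>i<k. X n i \<noteq> b i)}
    \<le> liminf (\<lambda>t. ennreal (1 - real (card {n\<in>{1..Suc (sq t)}. n \<in> Q}) / real (Suc (sq t))))"
proof -
  define B where "B j = {b. \<forall>n>j. n \<in> Q \<longrightarrow> (\<exists>i<j. X n i \<noteq> b i)}" for j
  have Bs: "B j \<in> sets mu" for j
  proof -
    have "Measurable.pred mu (\<lambda>b. \<forall>n. j < n \<longrightarrow> n \<in> Q \<longrightarrow> (\<exists>i<j. X n i \<noteq> b i))"
      by measurable
    then have "{b \<in> space mu. \<forall>n. j < n \<longrightarrow> n \<in> Q \<longrightarrow> (\<exists>i<j. X n i \<noteq> b i)} \<in> sets mu"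
      unfolding pred_def .
    then show ?thesis unfolding B_def space_mu by simp
  qed
  have inc: "incseq B"
    unfolding incseq_def B_def by (auto 4 4 intro: order.strict_trans2 less_le_trans)
  have eqU: "{b. \<exists>k M. \<forall>n>M. n \<in> Q \<longrightarrow> (\<exists>i<k. X n i \<noteq> b i)} = (\<Union>j. B j)"
  proof (intro set_eqI iffI)
    fix b assume "b \<in> {b. \<exists>k M. \<forall>n>M. n \<in> Q \<longrightarrow> (\<exists>i<k. X n i \<noteq> b i)}"
    then obtain k M where kM: "\<forall>n>M. n \<in> Q \<longrightarrow> (\<exists>i<k. X n i \<noteq> b i)" by blast
    have "b \<in> B (max k M)" unfolding B_def
    proof (intro CollectI allI impI)
      fix n assume "max k M < n" "n \<in> Q"
      then obtain i where "i < k" "X n i \<noteq> b i" using kM by auto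
      then show "\<exists>i<max k M. X n i \<noteq> b i" by (intro exI[of _ i]) auto
    qed
    then show "b \<in> (\<Union>j. B j)" by blast
  next
    fix b assume "b \<in> (\<Union>j. B j)"
    then show "b \<in> {b. \<exists>k M. \<forall>n>M. n \<in> Q \<longrightarrow> (\<exists>i<k. X n i \<noteq> b i)}"
      unfolding B_def by blast
  qed
  let ?L = "liminf (\<lambda>t. ennreal (1 - real (card {n\<in>{1..Suc (sq t)}. n \<in> Q}) / real (Suc (sq t))))"
  have Bj: "emeasure mu (B j) \<le> ?L" for j
  proof -
    define Vj where "Vj = {v \<in> Pat {..<j}. \<forall>n>j. n \<in> Q \<longrightarrow> v \<noteq> restrict (X n) {..<j}}"
    have Vs: "Vj \<in> sets (PiM {..<j} (\<lambda>_. borel))"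
      by (rule sub_Pat_sets) (auto simp: Vj_def)
    define R where "R = space (PiM {..<j} (\<lambda>_. borel::real measure)) - Pat {..<j}"
    have Rs: "R \<in> sets (PiM {..<j} (\<lambda>_. borel))"
      unfolding R_def by (rule sets.compl_sets[OF Pat_sets[OF finite_lessThan]])
    have sub: "B j \<subseteq> {b. restrict b {..<j} \<in> Vj} \<union> {b. restrict b {..<j} \<in> R}"
    proof (rule subsetI)
      fix b assume b: "b \<in> B j"
      show "b \<in> {b. restrict b {..<j} \<in> Vj} \<union> {b. restrict b {..<j} \<in> R}"
      proof (cases "restrict b {..<j} \<in> Pat {..<j}")
        case True
        have nq: "\<forall>n. j < n \<longrightarrow> n \<in> Q \<longrightarrow> restrict b {..<j} \<noteq> restrict (X n) {..<j}"
        proof (intro allI impI notI)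
          fix n assume n: "j < n" "n \<in> Q" and eq: "restrict b {..<j} = restrict (X n) {..<j}"
          obtain i where i: "i < j" "X n i \<noteq> b i" using b n unfolding B_def by blast
          have "restrict b {..<j} i = restrict (X n) {..<j} i" using eq by (rule fun_cong)
          then show False using i by simp
        qed
        have "restrict b {..<j} \<in> Vj" unfolding Vj_def using True nq by blast
        then show ?thesis by blast
      next
        case False
        have "restrict b {..<j} \<in> space (PiM {..<j} (\<lambda>_. borel::real measure))"
          by (simp add: space_PiM)
        then have "restrict b {..<j} \<in> R" unfolding R_def using False by blast
        then show ?thesis by blast
      qed
    qed
    have W0: "W {..<j} R = 0"
      using W_sum[of "{..<j}" R] by (simp add: R_def)
    have "emeasure mu (B j) \<le> emeasure mu ({b. restrict b {..<j} \<in> Vj} \<union> {b. restrict b {..<j} \<in> R})"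
      using sub by (intro emeasure_mono) (use emb_sets[OF Vs] emb_sets[OF Rs] in auto)
    also have "\<dots> \<le> emeasure mu {b. restrict b {..<j} \<in> Vj} + emeasure mu {b. restrict b {..<j} \<in> R}"
      by (rule emeasure_subadditive) (use emb_sets[OF Vs] emb_sets[OF Rs] in auto)
    also have "\<dots> = ennreal (W {..<j} Vj)"
      using mu_emb[OF _ Vs] mu_emb[OF _ Rs] W0 by simp
    also have "\<dots> \<le> ?L"
    proof (rule W_liminf[of _ "real j"])
      fix N :: nat assume N: "N \<ge> 1"
      have s1: "{n \<in> {1..N}. restrict (X n) {..<j} \<in> Vj} \<subseteq> {1..j} \<union> ({1..N} - Q)"
      proof
        fix x assume x: "x \<in> {n \<in> {1..N}. restrict (X n) {..<j} \<in> Vj}"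
        then have "\<not> (j < x \<and> x \<in> Q)" unfolding Vj_def by blast
        then show "x \<in> {1..j} \<union> ({1..N} - Q)" using x by auto
      qed
      have "card {n \<in> {1..N}. restrict (X n) {..<j} \<in> Vj} \<le> card ({1..j} \<union> ({1..N} - Q))"
        by (rule card_mono[OF _ s1]) auto
      also have "\<dots> \<le> card {1..j} + card ({1..N} - Q)" by (rule card_Un_le)
      finally have c1: "card {n \<in> {1..N}. restrict (X n) {..<j} \<in> Vj} \<le> j + card ({1..N} - Q)" by simp
      have "card {1..N} = card ({1..N} \<inter> Q) + card ({1..N} - Q)"
      proof -
        have "{1..N} = ({1..N} \<inter> Q) \<union> ({1..N} - Q)" by blast
        then have "card {1..N} = card (({1..N} \<inter> Q) \<union> ({1..N} - Q))" by simp
        also have "\<dots> = card ({1..N} \<inter> Q) + card ({1..N} - Q)"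
          by (rule card_Un_disjoint) auto
        finally show ?thesis .
      qed
      then have c2: "card ({1..N} - Q) = N - card {n\<in>{1..N}. n \<in> Q}"
        by (simp add: Int_def conj_commute)
      have c3: "card {n\<in>{1..N}. n \<in> Q} \<le> N"
      proof -
        have "card {n\<in>{1..N}. n \<in> Q} \<le> card {1..N}" by (rule card_mono) auto
        then show ?thesis by simp
      qed
      have "real (card {n \<in> {1..N}. restrict (X n) {..<j} \<in> Vj}) \<le> real j + real N - real (card {n\<in>{1..N}. n \<in> Q})"
        using c1 c2 c3 by linarith
      then show "emp N {..<j} Vj \<le> real j / real N + (1 - real (card {n\<in>{1..N}. n \<in> Q}) / real N)"
        using N by (simp add: emp_def field_simps)
    qed auto
    finally show ?thesis .
  qed
  have "emeasure mu (\<Union>j. B j) = (SUP j. emeasure mu (B j))"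
    by (rule SUP_emeasure_incseq[symmetric]) (use Bs inc in auto)
  also have "\<dots> \<le> ?L" by (rule SUP_least) (rule Bj)
  finally show ?thesis unfolding eqU .
qed

end


context tri begin

lemma card_sum_ind:
  fixes N :: nat and h :: "nat \<Rightarrow> nat" and a :: "nat \<Rightarrow> real"
  shows "real (card {n\<in>{1..N}. a (h n) = (1::real)}) = (\<Sum>n\<in>{1..N}. indicator {\<omega>. \<omega> (h n) = 1} a)"
proof -
  have "(\<Sum>n\<in>{1..N}. indicator {\<omega>. \<omega> (h n) = (1::real)} a) = (\<Sum>n\<in>{1..N}. if a (h n) = 1 then 1 else (0::real))"
    by (intro sum.cong) (auto simp: indicator_def)
  also have "\<dots> = (\<Sum>n\<in>{n\<in>{1..N}. a (h n) = 1}. 1)"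
    by (rule sum.inter_filter[symmetric]) simp
  finally show ?thesis by simp
qed

lemma integral_part:
  fixes h :: "nat \<Rightarrow> nat" and \<gamma> :: real
  assumes h\<gamma>: "\<And>n. n \<ge> 1 \<Longrightarrow> measure mu {\<omega>. \<omega> (h n) = 1} \<ge> \<gamma>"
  shows "(\<integral>\<^sup>+ a. liminf (\<lambda>t. ennreal (1 - real (card {n\<in>{1..Suc (sq t)}. a (h n) = 1}) / real (Suc (sq t)))) \<partial>mu)
          \<le> ennreal (1 - \<gamma>)"
proof -
  define F where "F N a = 1 - (\<Sum>n\<in>{1..N}. indicator {\<omega>::nat\<Rightarrow>real. \<omega> (h n) = 1} a) / real N" for N a
  have Feq: "1 - real (card {n\<in>{1..N}. a (h n) = 1}) / real N = F N a" for N and a :: "nat \<Rightarrow> real"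
    unfolding F_def by (simp only: card_sum_ind)
  have Fm: "F N \<in> borel_measurable mu" for N
    unfolding F_def by measurable
  have Fb: "0 \<le> F (Suc N) a \<and> F (Suc N) a \<le> 1" for N a
  proof -
    have "card {n\<in>{1..Suc N}. a (h n) = 1} \<le> card {1..Suc N}" by (rule card_mono) auto
    then have "real (card {n\<in>{1..Suc N}. a (h n) = 1}) \<le> real (Suc N)" by simp
    then show ?thesis unfolding Feq[symmetric] by (simp add: field_simps del: of_nat_Suc)
  qed
  have int: "integrable mu (F (Suc N))" for N
    by (rule PP.P.integrable_const_bound[where B=1]) (use Fb Fm in auto)
  have "(\<integral>\<^sup>+ a. liminf (\<lambda>t. ennreal (F (Suc (sq t)) a)) \<partial>mu)
        \<le> liminf (\<lambda>t. \<integral>\<^sup>+ a. ennreal (F (Suc (sq t)) a) \<partial>mu)"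
    by (rule nn_integral_liminf) (use Fm in measurable)
  also have "\<dots> \<le> liminf (\<lambda>t. ennreal (1 - \<gamma>))"
  proof (intro Liminf_mono always_eventually allI)
    fix t
    let ?N = "Suc (sq t)"
    have "(\<integral>\<^sup>+ a. ennreal (F ?N a) \<partial>mu) = ennreal (\<integral> a. F ?N a \<partial>mu)"
      by (rule nn_integral_eq_integral[OF int]) (use Fb in auto)
    also have "(\<integral> a. F ?N a \<partial>mu) = 1 - (\<Sum>n\<in>{1..?N}. measure mu {\<omega>. \<omega> (h n) = 1}) / real ?N"
    proof -
      have ii: "integrable mu (\<lambda>a. indicator {\<omega>. \<omega> (h n) = (1::real)} a :: real)" for n
        by (rule PP.P.integrable_const_bound[where B=1]) (auto simp: indicator_def)
      have ii2: "integrable mu (\<lambda>a. (\<Sum>n\<in>{1..?N}. indicator {\<omega>. \<omega> (h n) = (1::real)} a) / real ?N :: real)"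
      proof (rule Bochner_Integration.integrable_divide_zero)
        show "integrable mu (\<lambda>a. \<Sum>n\<in>{1..?N}. indicator {\<omega>. \<omega> (h n) = (1::real)} a :: real)"
          by (rule Bochner_Integration.integrable_sum) (rule ii)
      qed
      have "(\<integral> a. F ?N a \<partial>mu) = (\<integral> a. 1 \<partial>mu) - (\<integral> a. (\<Sum>n\<in>{1..?N}. indicator {\<omega>. \<omega> (h n) = 1} a) / real ?N \<partial>mu)"
        unfolding F_def by (rule Bochner_Integration.integral_diff) (use ii2 in auto)
      also have "(\<integral> a. (\<Sum>n\<in>{1..?N}. indicator {\<omega>. \<omega> (h n) = (1::real)} a) / real ?N \<partial>mu)
          = (\<integral> a. (\<Sum>n\<in>{1..?N}. indicator {\<omega>. \<omega> (h n) = (1::real)} a) \<partial>mu) / real ?N"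
        by (rule Bochner_Integration.integral_divide_zero)
      also have "(\<integral> a. (\<Sum>n\<in>{1..?N}. indicator {\<omega>. \<omega> (h n) = (1::real)} a :: real) \<partial>mu)
          = (\<Sum>n\<in>{1..?N}. \<integral> a. indicator {\<omega>. \<omega> (h n) = (1::real)} a \<partial>mu)"
        by (rule Bochner_Integration.integral_sum) (use ii in auto)
      also have "\<dots> = (\<Sum>n\<in>{1..?N}. measure mu {\<omega>. \<omega> (h n) = 1})"
        by (intro sum.cong refl) (simp add: Bochner_Integration.integral_indicator space_PiM PiE_UNIV_domain)
      finally show ?thesis using PP.P.prob_space by (simp add: space_PiM PiE_UNIV_domain)
    qed
    also have "\<dots> \<le> 1 - \<gamma>"
    proof -
      have "(\<Sum>n\<in>{1..?N}. \<gamma>) \<le> (\<Sum>n\<in>{1..?N}. measure mu {\<omega>. \<omega> (h n) = 1})"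
        by (intro sum_mono h\<gamma>) auto
      then have "real ?N * \<gamma> \<le> (\<Sum>n\<in>{1..?N}. measure mu {\<omega>. \<omega> (h n) = 1})" by simp
      then have "\<gamma> \<le> (\<Sum>n\<in>{1..?N}. measure mu {\<omega>. \<omega> (h n) = 1}) / real ?N"
        by (simp add: field_simps del: of_nat_Suc)
      then show ?thesis by simp
    qed
    finally show "(\<integral>\<^sup>+ a. ennreal (F ?N a) \<partial>mu) \<le> ennreal (1 - \<gamma>)"
      by (simp add: ennreal_leI)
  qed
  also have "\<dots> = ennreal (1 - \<gamma>)" by (simp add: Liminf_const)
  finally show ?thesis unfolding Feq .
qed

end


context tri begin

definition NA1 :: "((nat \<Rightarrow> real) \<times> (nat \<Rightarrow> real)) set" where
  "NA1 = {p. \<exists>k M. \<forall>n>M. fst p (2*n) = 1 \<longrightarrow> (\<exists>i<k. X n i \<noteq> snd p i)}"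
definition NA2 :: "((nat \<Rightarrow> real) \<times> (nat \<Rightarrow> real)) set" where
  "NA2 = {p. \<exists>k M. \<forall>n>M. snd p (2*n+1) = 1 \<longrightarrow> (\<exists>i<k. X n i \<noteq> fst p i)}"

lemma NA1_sets: "NA1 \<in> sets (mu \<Otimes>\<^sub>M mu)"
proof -
  have "Measurable.pred (mu \<Otimes>\<^sub>M mu) (\<lambda>p. \<exists>k M. \<forall>n. M < n \<longrightarrow> fst p (2*n) = 1 \<longrightarrow> (\<exists>i<k. X n i \<noteq> snd p i))"
    by measurable
  then have m: "{p \<in> space (mu \<Otimes>\<^sub>M mu). \<exists>k M. \<forall>n. M < n \<longrightarrow> fst p (2*n) = 1 \<longrightarrow> (\<exists>i<k. X n i \<noteq> snd p i)} \<in> sets (mu \<Otimes>\<^sub>M mu)"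
    unfolding pred_def .
  have sp: "space (mu \<Otimes>\<^sub>M mu) = UNIV" by (simp add: space_pair_measure space_PiM PiE_UNIV_domain)
  have "{p \<in> space (mu \<Otimes>\<^sub>M mu). \<exists>k M. \<forall>n. M < n \<longrightarrow> fst p (2*n) = 1 \<longrightarrow> (\<exists>i<k. X n i \<noteq> snd p i)} = NA1"
    unfolding sp NA1_def by blast
  with m show ?thesis by (simp only:)
qed

lemma NA2_sets: "NA2 \<in> sets (mu \<Otimes>\<^sub>M mu)"
proof -
  have "Measurable.pred (mu \<Otimes>\<^sub>M mu) (\<lambda>p. \<exists>k M. \<forall>n. M < n \<longrightarrow> snd p (2*n+1) = 1 \<longrightarrow> (\<exists>i<k. X n i \<noteq> fst p i))"
    by measurable
  then have m: "{p \<in> space (mu \<Otimes>\<^sub>M mu). \<exists>k M. \<forall>n. M < n \<longrightarrow> snd p (2*n+1) = 1 \<longrightarrow> (\<exists>i<k. X n i \<noteq> fst p i)} \<in> sets (mu \<Otimes>\<^sub>M mu)"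
    unfolding pred_def .
  have sp: "space (mu \<Otimes>\<^sub>M mu) = UNIV" by (simp add: space_pair_measure space_PiM PiE_UNIV_domain)
  have "{p \<in> space (mu \<Otimes>\<^sub>M mu). \<exists>k M. \<forall>n. M < n \<longrightarrow> snd p (2*n+1) = 1 \<longrightarrow> (\<exists>i<k. X n i \<noteq> fst p i)} = NA2"
    unfolding sp NA2_def by blast
  with m show ?thesis by (simp only:)
qed

lemma NA1_bound: "emeasure (mu \<Otimes>\<^sub>M mu) NA1 \<le> ennreal (1 - \<beta>)"
proof -
  have "emeasure (mu \<Otimes>\<^sub>M mu) NA1 = (\<integral>\<^sup>+a. emeasure mu (Pair a -` NA1) \<partial>mu)"
    by (rule PP.P.emeasure_pair_measure_alt[OF NA1_sets])
  also have "\<dots> \<le> (\<integral>\<^sup>+ a. liminf (\<lambda>t. ennreal (1 - real (card {n\<in>{1..Suc (sq t)}. a (2*n) = 1}) / real (Suc (sq t)))) \<partial>mu)"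
  proof (rule nn_integral_mono)
    fix a
    have "Pair a -` NA1 = {b. \<exists>k M. \<forall>n>M. n \<in> {n. a (2*n) = 1} \<longrightarrow> (\<exists>i<k. X n i \<noteq> b i)}"
      by (auto simp: NA1_def)
    then show "emeasure mu (Pair a -` NA1) \<le> liminf (\<lambda>t. ennreal (1 - real (card {n\<in>{1..Suc (sq t)}. a (2*n) = 1}) / real (Suc (sq t))))"
      using section_bound[of "{n. a (2*n) = 1}"] by simp
  qed
  also have "\<dots> \<le> ennreal (1 - \<beta>)"
    by (rule integral_part) (rule mu_L)
  finally show ?thesis .
qed

lemma NA2_bound: "emeasure (mu \<Otimes>\<^sub>M mu) NA2 \<le> ennreal \<alpha>"
proof -
  interpret pair_sigma_finite mu mu
    by (rule pair_sigma_finite.intro) (rule PP.P.sigma_finite_measure_axioms)+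
  have "emeasure (mu \<Otimes>\<^sub>M mu) NA2 = (\<integral>\<^sup>+b. emeasure mu ((\<lambda>a. (a, b)) -` NA2) \<partial>mu)"
    by (rule emeasure_pair_measure_alt2[OF NA2_sets])
  also have "\<dots> \<le> (\<integral>\<^sup>+ b. liminf (\<lambda>t. ennreal (1 - real (card {n\<in>{1..Suc (sq t)}. b (2*n+1) = 1}) / real (Suc (sq t)))) \<partial>mu)"
  proof (rule nn_integral_mono)
    fix b
    have "(\<lambda>a. (a, b)) -` NA2 = {a. \<exists>k M. \<forall>n>M. n \<in> {n. b (2*n+1) = 1} \<longrightarrow> (\<exists>i<k. X n i \<noteq> a i)}"
      by (auto simp: NA2_def)
    then show "emeasure mu ((\<lambda>a. (a, b)) -` NA2) \<le> liminf (\<lambda>t. ennreal (1 - real (card {n\<in>{1..Suc (sq t)}. b (2*n+1) = 1}) / real (Suc (sq t))))"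
      using section_bound[of "{n. b (2*n+1) = 1}"] by simp
  qed
  also have "\<dots> \<le> ennreal (1 - (1 - \<alpha>))"
    by (rule integral_part[where h="\<lambda>n. 2*n+1"]) (rule mu_Z)
  finally show ?thesis by simp
qed

lemma good_pair: "\<exists>a b. (a, b) \<notin> NA1 \<and> (a, b) \<notin> NA2"
proof (rule ccontr)
  assume "\<not> ?thesis"
  then have U: "space (mu \<Otimes>\<^sub>M mu) \<subseteq> NA1 \<union> NA2" by auto
  interpret pair_prob_space mu mu
    by (rule pair_prob_space.intro, rule pair_sigma_finite.intro) (rule PP.P.sigma_finite_measure_axioms PP.P.prob_space_axioms)+
  have "1 = emeasure (mu \<Otimes>\<^sub>M mu) (space (mu \<Otimes>\<^sub>M mu))" by (simp add: P.emeasure_space_1)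
  also have "\<dots> \<le> emeasure (mu \<Otimes>\<^sub>M mu) (NA1 \<union> NA2)"
    by (rule emeasure_mono[OF U]) (use NA1_sets NA2_sets in auto)
  also have "\<dots> \<le> emeasure (mu \<Otimes>\<^sub>M mu) NA1 + emeasure (mu \<Otimes>\<^sub>M mu) NA2"
    by (rule emeasure_subadditive[OF NA1_sets NA2_sets])
  also have "\<dots> \<le> ennreal (1 - \<beta>) + ennreal \<alpha>"
    by (intro add_mono NA1_bound NA2_bound)
  also have "\<dots> = ennreal (1 - \<beta> + \<alpha>)"
    using a0 b1 by (simp add: ennreal_plus)
  finally have "1 \<le> ennreal (1 - \<beta> + \<alpha>)" .
  moreover have "1 - \<beta> + \<alpha> < 1" using ab by simp
  then have "ennreal (1 - \<beta> + \<alpha>) < ennreal 1" by (intro ennreal_lessI) auto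
  with \<open>1 \<le> ennreal (1 - \<beta> + \<alpha>)\<close> show False by simp
qed

end


context tri begin

lemma half_graph: "has_fully_lower_triangular_submatrix A"
proof -
  obtain a b where ab: "(a, b) \<notin> NA1" "(a, b) \<notin> NA2" using good_pair by blast
  have n1: "\<not> (\<exists>k M. \<forall>n>M. a (2*n) = 1 \<longrightarrow> (\<exists>i<k. X n i \<noteq> b i))"
    using ab(1) unfolding NA1_def mem_Collect_eq fst_conv snd_conv .
  have n2: "\<not> (\<exists>k M. \<forall>n>M. b (2*n+1) = 1 \<longrightarrow> (\<exists>i<k. X n i \<noteq> a i))"
    using ab(2) unfolding NA2_def mem_Collect_eq fst_conv snd_conv .
  have H1: "\<exists>n>M. a (2*n) = 1 \<and> (\<forall>i<k. X n i = b i)" for k M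
    using n1 by blast
  have H2: "\<exists>n>M. b (2*n+1) = 1 \<and> (\<forall>i<k. X n i = a i)" for k M
    using n2 by blast
  define F where "F m = (SOME n. n > m \<and> a (2*n) = 1 \<and> (\<forall>i<2*m+2. X n i = b i))" for m
  define G where "G m = (SOME n. n > m \<and> b (2*n+1) = 1 \<and> (\<forall>i<2*m+1. X n i = a i))" for m
  have F: "F m > m \<and> a (2 * F m) = 1 \<and> (\<forall>i<2*m+2. X (F m) i = b i)" for m
    unfolding F_def by (rule someI_ex) (rule H1)
  have G: "G m > m \<and> b (2 * G m + 1) = 1 \<and> (\<forall>i<2*m+1. X (G m) i = a i)" for m
    unfolding G_def by (rule someI_ex) (rule H2)
  define z where "z = rec_nat (F 0) (\<lambda>m zm. if even m then G zm else F zm)"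
  have z0: "z 0 = F 0" by (simp add: z_def)
  have zS: "z (Suc m) = (if even m then G (z m) else F (z m))" for m by (simp add: z_def)
  have zinc: "z m < z (Suc m)" for m using F G by (simp add: zS)
  have zmono: "strict_mono z" using zinc by (simp add: strict_mono_Suc_iff)
  have zpos: "z m \<ge> 1" for m
  proof (induction m)
    case 0 then show ?case using F[of 0] by (simp add: z0)
  next
    case (Suc m) then show ?case using zinc[of m] by simp
  qed
  define c where "c j = z (2*j)" for j
  define r where "r j = z (2*j+1)" for j
  have rc: "r j = G (c j)" for j by (simp add: r_def c_def zS[of "2*j", simplified])
  have cS: "c (Suc j) = F (r j)" for j
  proof -
    have "c (Suc j) = z (Suc (2*j+1))" by (simp add: c_def)
    also have "\<dots> = F (z (2*j+1))" by (simp add: zS)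
    finally show ?thesis by (simp add: r_def)
  qed
  have c0: "c 0 = F 0" by (simp add: c_def z0)
  have cmono: "strict_mono c" unfolding c_def strict_mono_def using zmono by (simp add: strict_mono_less)
  have rmono: "strict_mono r" unfolding r_def strict_mono_def using zmono by (simp add: strict_mono_less)
  have ca: "a (2 * c j) = 1" for j
    by (cases j) (use F in \<open>auto simp: c0 cS\<close>)
  have rb: "b (2 * r j + 1) = 1" for j using G by (simp add: rc)
  have zero: "A (r i) (c j) = 0" if ij: "i < j" for i j
  proof -
    obtain j' where j': "j = Suc j'" using ij by (cases j) auto
    have "i \<le> j'" using ij j' by simp
    then have "r i \<le> r j'" using rmono by (simp add: strict_mono_less_eq)
    then have "2 * r i + 1 < 2 * r j' + 2" by simp
    then have "X (c j) (2 * r i + 1) = b (2 * r i + 1)" using F[of "r j'"] by (simp add: j' cS)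
    also have "\<dots> = 1" by (rule rb)
    finally show ?thesis using X_odd by blast
  qed
  have one: "A (r i) (c j) = 1" if ji: "j \<le> i" for i j
  proof -
    have "c j \<le> c i" using ji cmono by (simp add: strict_mono_less_eq)
    then have "2 * c j < 2 * c i + 1" by simp
    then have "X (r i) (2 * c j) = a (2 * c j)" using G[of "c i"] by (simp add: rc)
    also have "\<dots> = 1" by (rule ca)
    finally show ?thesis using X_even by blast
  qed
  define rI where "rI k = r (k - 1)" for k
  define cJ where "cJ l = c (l - 1)" for l
  have "inj_on rI {1..}"
  proof (rule inj_onI)
    fix x y assume "x \<in> {1..}" "y \<in> {1..}" "rI x = rI y"
    then show "x = y" using strict_mono_eq[OF rmono] by (simp add: rI_def)
  qed
  moreover have "inj_on cJ {1..}"
  proof (rule inj_onI)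
    fix x y assume "x \<in> {1..}" "y \<in> {1..}" "cJ x = cJ y"
    then show "x = y" using strict_mono_eq[OF cmono] by (simp add: cJ_def)
  qed
  moreover have "rI ` {1..} \<subseteq> {1..}" using zpos by (auto simp: rI_def r_def)
  moreover have "cJ ` {1..} \<subseteq> {1..}" using zpos by (auto simp: cJ_def c_def)
  moreover have "\<forall>k\<ge>1. \<forall>l\<ge>1. A (rI k) (cJ l) = 1 \<longleftrightarrow> k \<ge> l"
  proof (intro allI impI)
    fix k l :: nat assume kl: "k \<ge> 1" "l \<ge> 1"
    show "A (rI k) (cJ l) = 1 \<longleftrightarrow> k \<ge> l"
    proof (cases "l \<le> k")
      case True
      then have "l - 1 \<le> k - 1" by simp
      then show ?thesis using one True by (simp add: rI_def cJ_def)
    next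
      case False
      then have "k - 1 < l - 1" using kl by simp
      then show ?thesis using zero False by (simp add: rI_def cJ_def)
    qed
  qed
  ultimately show ?thesis unfolding has_fully_lower_triangular_submatrix_def by blast
qed

end

theorem theorem4p5:
  fixes A :: "nat \<Rightarrow> nat \<Rightarrow> nat" and \<alpha> \<beta> :: real
  assumes binary: "\<And>i j. i \<ge> 1 \<Longrightarrow> j \<ge> 1 \<Longrightarrow> A i j \<in> {0, 1}"
    and "0 \<le> \<alpha>" and "\<alpha> < \<beta>" and "\<beta> \<le> 1"
    and rows: "\<And>i. i \<ge> 1 \<Longrightarrow> upper_density (row A i) \<le> ereal \<alpha>"
    and cols: "\<And>j. j \<ge> 1 \<Longrightarrow> lower_density (col A j) \<ge> ereal \<beta>"
  shows "has_fully_lower_triangular_submatrix A"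
proof -
  interpret tri A \<alpha> \<beta>
    unfolding tri_def using assms by blast
  show ?thesis by (rule half_graph)
qed


end
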